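(* Let $G$ be a connected simple cubic graph such that $S_{16}$ admits a $G$-coloring. Then $G$ is isomorphic to $S_{16}$.
   Context: A simple graph has no loops and no parallel edges; a cubic graph is $3$-regular. For a graph $X$ and vertex $x$, $\partial_X(x)$ denotes the set of edges of $X$ incident to $x$. For cubic graphs $G, H$ (loopless, parallel edges allowed), an $H$-coloring of $G$ is a map $f: E(G)\to E(H)$ such that for every vertex $x$ of $G$ there is a vertex $y$ of $H$ with $f(\partial_G(x))=\partial_H(y)$. $S_{16}$ is the simple cubic graph on $16$ vertices defined as follows: it has a central vertex $c$, and for each $i\in\{1,2,3\}$ vertices $v_1^i,\dots,v_5^i$ with edges $v_1^iv_2^i, v_1^iv_3^i, v_1^iv_4^i, v_2^iv_3^i, v_2^iv_4^i, v_3^iv_5^i, v_4^iv_5^i$ and the edge $v_5^ic$ (so $S_{16}$ has $24$ edges, three of which, $v_5^ic$, are bridges). *)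

theory Defs
  imports Main
begin

definition simple_graph :: "'a set \<Rightarrow> 'a set set \<Rightarrow> bool" where
  "simple_graph V E \<longleftrightarrow> finite V \<and>
     (\<forall>e\<in>E. \<exists>u v. u \<in> V \<and> v \<in> V \<and> u \<noteq> v \<and> e = {u, v})"

definition incident :: "'a set set \<Rightarrow> 'a \<Rightarrow> 'a set set" where
  "incident E x = {e \<in> E. x \<in> e}"

definition cubic :: "'a set \<Rightarrow> 'a set set \<Rightarrow> bool" where
  "cubic V E \<longleftrightarrow> (\<forall>x\<in>V. card (incident E x) = 3)"

definition graph_connected :: "'a set \<Rightarrow> 'a set set \<Rightarrow> bool" where
  "graph_connected V E \<longleftrightarrow>
     (\<forall>u\<in>V. \<forall>v\<in>V. (u, v) \<in> {(a, b). {a, b} \<in> E}\<^sup>*)"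

definition H_coloring ::
  "'a set \<Rightarrow> 'a set set \<Rightarrow> 'b set \<Rightarrow> 'b set set \<Rightarrow> ('a set \<Rightarrow> 'b set) \<Rightarrow> bool" where
  "H_coloring VG EG VH EH f \<longleftrightarrow>
     (\<forall>e\<in>EG. f e \<in> EH) \<and>
     (\<forall>x\<in>VG. \<exists>y\<in>VH. f ` incident EG x = incident EH y)"

definition admits_coloring ::
  "'a set \<Rightarrow> 'a set set \<Rightarrow> 'b set \<Rightarrow> 'b set set \<Rightarrow> bool" where
  "admits_coloring VG EG VH EH \<longleftrightarrow> (\<exists>f. H_coloring VG EG VH EH f)"

definition graph_iso :: "'a set \<Rightarrow> 'a set set \<Rightarrow> 'b set \<Rightarrow> 'b set set \<Rightarrow> bool" where
  "graph_iso V1 E1 V2 E2 \<longleftrightarrow>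
     (\<exists>\<phi>. bij_betw \<phi> V1 V2 \<and>
        (\<forall>u\<in>V1. \<forall>v\<in>V1. {u, v} \<in> E1 \<longleftrightarrow> {\<phi> u, \<phi> v} \<in> E2))"

datatype s16v = Cen | Vx nat nat

definition S16_V :: "s16v set" where
  "S16_V = insert Cen {Vx i j | i j. i \<in> {1..3} \<and> j \<in> {1..5}}"

definition S16_E :: "s16v set set" where
  "S16_E = (\<Union>i\<in>{1..3::nat}.
     {{Vx i 1, Vx i 2}, {Vx i 1, Vx i 3}, {Vx i 1, Vx i 4}, {Vx i 2, Vx i 3},
      {Vx i 2, Vx i 4}, {Vx i 3, Vx i 5}, {Vx i 4, Vx i 5}, {Vx i 5, Cen}})"

end

theory Submission
  imports Defs
begin


lemma three_eq: "{1..3::nat} = {1,2,3}" "{1..5::nat} = {1,2,3,4,5}" by auto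

lemma S16_V_eq: "S16_V = {Cen, Vx 1 1, Vx 1 2, Vx 1 3, Vx 1 4, Vx 1 5, Vx 2 1, Vx 2 2, Vx 2 3, Vx 2 4, Vx 2 5, Vx 3 1, Vx 3 2, Vx 3 3, Vx 3 4, Vx 3 5}"
  unfolding S16_V_def three_eq
  apply (rule set_eqI)
  apply (simp only: insert_iff mem_Collect_eq empty_iff)
  apply (rule iffI)
   apply (elim disjE exE conjE; simp)
  apply (elim disjE; blast)
  done

lemma S16_E_eq: "S16_E = {{Vx 3 1, Vx 3 2}, {Vx 3 1, Vx 3 3}, {Vx 3 1, Vx 3 4}, {Vx 3 2, Vx 3 3},
      {Vx 3 2, Vx 3 4}, {Vx 3 3, Vx 3 5}, {Vx 3 4, Vx 3 5}, {Vx 3 5, Cen},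
 {Vx 2 1, Vx 2 2}, {Vx 2 1, Vx 2 3}, {Vx 2 1, Vx 2 4}, {Vx 2 2, Vx 2 3},
      {Vx 2 2, Vx 2 4}, {Vx 2 3, Vx 2 5}, {Vx 2 4, Vx 2 5}, {Vx 2 5, Cen},
 {Vx 1 1, Vx 1 2}, {Vx 1 1, Vx 1 3}, {Vx 1 1, Vx 1 4}, {Vx 1 2, Vx 1 3},
      {Vx 1 2, Vx 1 4}, {Vx 1 3, Vx 1 5}, {Vx 1 4, Vx 1 5}, {Vx 1 5, Cen}}"
  unfolding S16_E_def three_eq by simp

lemma inc_insert: "incident (insert a A) x = (if x \<in> a then insert a (incident A x) else incident A x)"
  unfolding incident_def by auto
lemma inc_empty: "incident {} x = {}" unfolding incident_def by auto

lemma S16_inc_card: "x \<in> S16_V \<Longrightarrow> card (incident S16_E x) = 3"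
  unfolding S16_V_eq
  apply (simp only: insert_iff empty_iff)
  apply (elim disjE; simp add: S16_E_eq inc_insert inc_empty doubleton_eq_iff)
  done

lemma S16_finite: "finite S16_E" unfolding S16_E_eq by simp

lemma ex_pair: "a \<in> V \<Longrightarrow> b \<in> V \<Longrightarrow> a \<noteq> b \<Longrightarrow> \<exists>u v. u\<in>V \<and> v\<in>V \<and> u\<noteq>v \<and> {a,b} = {u,v}" by blast

lemma S16_simple: "simple_graph S16_V S16_E"
  unfolding simple_graph_def
  apply (rule conjI)
   apply (simp add: S16_V_eq)
  apply (unfold S16_E_eq)
  apply (simp only: Ball_def insert_iff empty_iff)
  apply (intro allI impI)
  apply (elim disjE FalseE; hypsubst; rule ex_pair; simp add: S16_V_eq)
  done

lemma S16_blob: "i \<in> {1,2,3} \<Longrightarrow> {Vx i 1, Vx i 2} \<in> S16_E \<and> {Vx i 1, Vx i 3} \<in> S16_E \<and> {Vx i 1, Vx i 4} \<in> S16_E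
  \<and> {Vx i 2, Vx i 3} \<in> S16_E \<and> {Vx i 2, Vx i 4} \<in> S16_E \<and> {Vx i 3, Vx i 5} \<in> S16_E \<and> {Vx i 4, Vx i 5} \<in> S16_E
  \<and> {Vx i 5, Cen} \<in> S16_E"
  by (elim insertE; simp add: S16_E_eq)



definition blobR :: "('a \<Rightarrow> 'a \<Rightarrow> bool) \<Rightarrow> 'a \<Rightarrow> 'a \<Rightarrow> 'a \<Rightarrow> 'a \<Rightarrow> 'a \<Rightarrow> 'a \<Rightarrow> bool" where
 "blobR R a1 a2 a3 a4 a5 t \<longleftrightarrow> (\<forall>w. R a1 w \<longleftrightarrow> w = a2 \<or> w = a3 \<or> w = a4) \<and> (\<forall>w. R a2 w \<longleftrightarrow> w = a1 \<or> w = a3 \<or> w = a4)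
   \<and> (\<forall>w. R a3 w \<longleftrightarrow> w = a1 \<or> w = a2 \<or> w = a5) \<and> (\<forall>w. R a4 w \<longleftrightarrow> w = a1 \<or> w = a2 \<or> w = a5)
   \<and> (\<forall>w. R a5 w \<longleftrightarrow> w = a3 \<or> w = a4 \<or> w = t) \<and> distinct [a1,a2,a3,a4,a5,t]"

lemma swap12: "blobR R a1 a2 a3 a4 a5 t \<Longrightarrow> blobR R a2 a1 a3 a4 a5 t"
  unfolding blobR_def by auto
lemma swap34: "blobR R a1 a2 a3 a4 a5 t \<Longrightarrow> blobR R a1 a2 a4 a3 a5 t"
  unfolding blobR_def by auto

lemma bfacts:
  assumes "blobR R a1 a2 a3 a4 a5 t"
  shows "\<And>w. R a1 w \<Longrightarrow> w = a2 \<or> w = a3 \<or> w = a4" "\<And>w. R a2 w \<Longrightarrow> w = a1 \<or> w = a3 \<or> w = a4"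
    "\<And>w. R a3 w \<Longrightarrow> w = a1 \<or> w = a2 \<or> w = a5" "\<And>w. R a4 w \<Longrightarrow> w = a1 \<or> w = a2 \<or> w = a5"
    "\<And>w. R a5 w \<Longrightarrow> w = a3 \<or> w = a4 \<or> w = t"
    "R a1 a2" "R a1 a3" "R a1 a4" "R a2 a1" "R a2 a3" "R a2 a4" "R a3 a1" "R a3 a2" "R a3 a5"
    "R a4 a1" "R a4 a2" "R a4 a5" "R a5 a3" "R a5 a4" "R a5 t"
    "\<not> R a1 a5" "\<not> R a2 a5" "\<not> R a3 a4" "\<not> R a4 a3" "\<not> R a1 t" "\<not> R a2 t" "\<not> R a3 t" "\<not> R a4 t"
    "\<not> R a5 a1" "\<not> R a5 a2"
    "a1 \<noteq> a2" "a1 \<noteq> a3" "a1 \<noteq> a4" "a1 \<noteq> a5" "a1 \<noteq> t" "a2 \<noteq> a3" "a2 \<noteq> a4" "a2 \<noteq> a5" "a2 \<noteq> t"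
    "a3 \<noteq> a4" "a3 \<noteq> a5" "a3 \<noteq> t" "a4 \<noteq> a5" "a4 \<noteq> t" "a5 \<noteq> t"
  using assms unfolding blobR_def by auto

lemma C13:
  assumes A: "blobR R a1 a2 a3 a4 a5 s" and B: "blobR R b1 b2 b3 b4 b5 t" and S: "\<And>u w. R u w = R w u"
    and eq: "a1 = b3"
  shows False
proof -
  note a = bfacts[OF A] and b = bfacts[OF B]
  have m2: "a2 = b1 \<or> a2 = b2 \<or> a2 = b5" using b(3)[of a2] a(6) eq by simp
  have m3: "a3 = b1 \<or> a3 = b2 \<or> a3 = b5" using b(3)[of a3] a(7) eq by simp
  have m4: "a4 = b1 \<or> a4 = b2 \<or> a4 = b5" using b(3)[of a4] a(8) eq by simp
  show False using m2 m3 m4 a(10,11,36,37,40) b(21,22,29,30) by metis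
qed

lemma C15:
  assumes A: "blobR R a1 a2 a3 a4 a5 s" and B: "blobR R b1 b2 b3 b4 b5 t" and S: "\<And>u w. R u w = R w u"
    and eq: "a1 = b5"
  shows False
proof -
  note a = bfacts[OF A] and b = bfacts[OF B]
  have m2: "a2 = b3 \<or> a2 = b4 \<or> a2 = t" using b(5)[of a2] a(6) eq by simp
  have m3: "a3 = b3 \<or> a3 = b4 \<or> a3 = t" using b(5)[of a3] a(7) eq by simp
  have m4: "a4 = b3 \<or> a4 = b4 \<or> a4 = t" using b(5)[of a4] a(8) eq by simp
  have "\<not> R b3 t" "\<not> R b4 t" "\<not> R t b3" "\<not> R t b4" using b(27,28) S by auto
  then show False using m2 m3 m4 a(10,11,36,37,39) b(23,24) by metis
qed

lemma C35:
  assumes A: "blobR R a1 a2 a3 a4 a5 s" and B: "blobR R b1 b2 b3 b4 b5 t" and S: "\<And>u w. R u w = R w u"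
    and eq: "a3 = b5"
  shows False
proof -
  note a = bfacts[OF A] and b = bfacts[OF B]
  have m1: "a1 = b3 \<or> a1 = b4 \<or> a1 = t" using b(5)[of a1] a(12) eq by simp
  have m2: "a2 = b3 \<or> a2 = b4 \<or> a2 = t" using b(5)[of a2] a(13) eq by simp
  have "\<not> R b3 t" "\<not> R b4 t" "\<not> R t b3" "\<not> R t b4" using b(27,28) S by auto
  then show False using m1 m2 a(6,31) b(23,24) by metis
qed


lemma C11:
  assumes A: "blobR R a1 a2 a3 a4 a5 s" and B: "blobR R b1 b2 b3 b4 b5 t" and S: "\<And>u w. R u w = R w u"
    and eq: "a1 = b1"
  shows "a5 = b5 \<and> s = t"
proof -
  note a = bfacts[OF A] and b = bfacts[OF B]
  have h2: "b2 = a2 \<or> b2 = a3 \<or> b2 = a4" using a(1)[of b2] b(6) eq by simp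
  have h3: "b3 = a2 \<or> b3 = a3 \<or> b3 = a4" using a(1)[of b3] b(7) eq by simp
  have h4: "b4 = a2 \<or> b4 = a3 \<or> b4 = a4" using a(1)[of b4] b(8) eq by simp
  have e2: "b2 = a2" using h2 h3 h4 b(10,11,36,37,40) a(23,24) by metis
  have b34: "(b3 = a3 \<and> b4 = a4) \<or> (b3 = a4 \<and> b4 = a3)" using h3 h4 e2 b(36,37,40) by metis
  have e5: "b5 = a5"
  proof -
    have "b5 = a1 \<or> b5 = a2 \<or> b5 = a5" using b34 a(3)[of b5] a(4)[of b5] b(14) by auto
    then show ?thesis using eq e2 b(34,38) by auto
  qed
  have "t = a3 \<or> t = a4 \<or> t = s" using a(5)[of t] b(20) e5 by simp
  then have "t = s" using b34 b(42,44) by auto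
  then show ?thesis using e5 by simp
qed

lemma C33:
  assumes A: "blobR R a1 a2 a3 a4 a5 s" and B: "blobR R b1 b2 b3 b4 b5 t" and S: "\<And>u w. R u w = R w u"
    and eq: "a3 = b3"
  shows "a5 = b5 \<and> s = t"
proof -
  note a = bfacts[OF A] and b = bfacts[OF B]
  have h1: "b1 = a1 \<or> b1 = a2 \<or> b1 = a5" using a(3)[of b1] b(12) eq by simp
  have h2: "b2 = a1 \<or> b2 = a2 \<or> b2 = a5" using a(3)[of b2] b(13) eq by simp
  have "b1 \<noteq> a5" using h2 b(6,31) a(29,30) by metis
  then have "b1 = a1 \<or> b1 = a2" using h1 by simp
  then show ?thesis
  proof
    assume "b1 = a1" then show ?thesis using C11[OF A B S] by simp
  next
    assume "b1 = a2" then show ?thesis using C11[OF swap12[OF A] B S] by simp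
  qed
qed

lemma C55:
  assumes A: "blobR R a1 a2 a3 a4 a5 s" and B: "blobR R b1 b2 b3 b4 b5 t" and S: "\<And>u w. R u w = R w u"
    and eq: "a5 = b5"
  shows "a5 = b5 \<and> s = t"
proof -
  note a = bfacts[OF A] and b = bfacts[OF B]
  have h3: "b3 = a3 \<or> b3 = a4 \<or> b3 = s" using a(5)[of b3] b(18) eq by simp
  have h4: "b4 = a3 \<or> b4 = a4 \<or> b4 = s" using a(5)[of b4] b(19) eq by simp
  show ?thesis
  proof (cases "b3 = s")
    case False
    then have "b3 = a3 \<or> b3 = a4" using h3 by simp
    then show ?thesis
    proof
      assume "b3 = a3" then show ?thesis using C33[OF A B S] by simp
    next
      assume "b3 = a4" then show ?thesis using C33[OF swap34[OF A] B S] by simp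
    qed
  next
    case True
    then have "b4 = a3 \<or> b4 = a4" using h4 b(40) by auto
    then show ?thesis
    proof
      assume "b4 = a3" then show ?thesis using C33[OF A swap34[OF B] S] by simp
    next
      assume "b4 = a4" then show ?thesis using C33[OF swap34[OF A] swap34[OF B] S] by simp
    qed
  qed
qed

lemma overlap:
  assumes A: "blobR R a1 a2 a3 a4 a5 s" and B: "blobR R b1 b2 b3 b4 b5 t" and S: "\<And>u w. R u w = R w u"
    and ov: "x \<in> {a1,a2,a3,a4,a5}" "x \<in> {b1,b2,b3,b4,b5}"
  shows "a5 = b5 \<and> s = t"
proof -
  have S': "\<And>u w. R u w = R w u" by (rule S)
  note A12 = swap12[OF A] and B12 = swap12[OF B] and A34 = swap34[OF A] and B34 = swap34[OF B]
  from ov show ?thesis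
    apply (simp only: insert_iff empty_iff)
    apply (elim disjE; hypsubst?)
    by (metis C11 C13 C15 C35 C33 C55 A B A12 B12 A34 B34 S)+
qed



locale col =
  fixes V :: "'a set" and E :: "'a set set" and f :: "s16v set \<Rightarrow> 'a set" and phi :: "s16v \<Rightarrow> 'a"
  assumes sg: "simple_graph V E" and cub: "cubic V E"
    and phiV: "\<And>x. x \<in> S16_V \<Longrightarrow> phi x \<in> V"
    and img: "\<And>x. x \<in> S16_V \<Longrightarrow> f ` incident S16_E x = incident E (phi x)"
begin

lemma edge2: "e \<in> E \<Longrightarrow> \<exists>u v. u \<in> V \<and> v \<in> V \<and> u \<noteq> v \<and> e = {u,v}"
  using sg unfolding simple_graph_def by blast

lemma finE: "finite E"
proof -
  have "E \<subseteq> Pow V" using edge2 by blast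
  moreover have "finite V" using sg unfolding simple_graph_def by blast
  ultimately show ?thesis by (meson finite_Pow_iff finite_subset)
qed

lemma fin_inc: "finite (incident E u)"
  using finE unfolding incident_def by simp

lemma card_inc: "u \<in> V \<Longrightarrow> card (incident E u) = 3"
  using cub unfolding cubic_def by blast

lemma three:
  assumes "u \<in> V" "e1 \<in> incident E u" "e2 \<in> incident E u" "e3 \<in> incident E u"
    "e1 \<noteq> e2" "e1 \<noteq> e3" "e2 \<noteq> e3"
  shows "incident E u = {e1,e2,e3}"
proof -
  have "{e1,e2,e3} \<subseteq> incident E u" using assms by blast
  moreover have "card {e1,e2,e3} = 3" using assms by simp
  ultimately show ?thesis using card_inc[OF assms(1)] fin_inc
    by (metis card_subset_eq)
qed

lemma noloop: "{u} \<notin> E"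
proof
  assume "{u} \<in> E"
  then obtain a b where "a \<noteq> b" "{u} = {a,b}" using edge2 by blast
  then have "a \<in> {u}" "b \<in> {u}" by auto
  then show False using \<open>a \<noteq> b\<close> by simp
qed

lemma pair: "e \<in> E \<Longrightarrow> a \<in> e \<Longrightarrow> b \<in> e \<Longrightarrow> a \<noteq> b \<Longrightarrow> e = {a,b}"
  using edge2 by blast

lemma pair1: "e \<in> E \<Longrightarrow> a \<in> e \<Longrightarrow> \<exists>t. t \<noteq> a \<and> e = {a,t}"
proof -
  assume "e \<in> E" "a \<in> e"
  then obtain u v where uv: "u \<noteq> v" "e = {u,v}" using edge2 by blast
  show ?thesis
  proof (cases "a = u")
    case True then show ?thesis using uv by (intro exI[of _ v]) auto
  next
    case False then have "a = v" using uv \<open>a \<in> e\<close> by blast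
    then show ?thesis using uv by (intro exI[of _ u]) (auto simp: insert_commute)
  qed
qed

lemma inc_iff: "e \<in> incident E u \<longleftrightarrow> e \<in> E \<and> u \<in> e"
  unfolding incident_def by simp

lemma S16_edge: "{x,y} \<in> S16_E \<Longrightarrow> x \<in> S16_V \<and> y \<in> S16_V \<and> x \<noteq> y"
  using S16_simple unfolding simple_graph_def by (metis doubleton_eq_iff insert_absorb2 insert_iff singleton_iff)

lemma inj: "x \<in> S16_V \<Longrightarrow> inj_on f (incident S16_E x)"
  apply (rule eq_card_imp_inj_on)
  using S16_finite apply (simp add: incident_def)
  by (simp add: img card_inc phiV S16_inc_card)

lemma fe: "{x,y} \<in> S16_E \<Longrightarrow> f {x,y} \<in> incident E (phi x)"
proof -
  assume a: "{x,y} \<in> S16_E"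
  then have "x \<in> S16_V" using S16_edge by blast
  moreover have "{x,y} \<in> incident S16_E x" using a unfolding incident_def by simp
  ultimately show ?thesis using img by blast
qed

lemma fe': "{x,y} \<in> S16_E \<Longrightarrow> f {x,y} \<in> incident E (phi y)"
  using fe[of y x] by (simp add: insert_commute)

lemma proper: "{x,y} \<in> S16_E \<Longrightarrow> phi x \<noteq> phi y \<Longrightarrow> f {x,y} = {phi x, phi y}"
  using fe fe' pair inc_iff by metis

lemma dist: "{x,y} \<in> S16_E \<Longrightarrow> {x,z} \<in> S16_E \<Longrightarrow> y \<noteq> z \<Longrightarrow> f {x,y} \<noteq> f {x,z}"
proof
  assume a: "{x,y} \<in> S16_E" "{x,z} \<in> S16_E" "y \<noteq> z" "f {x,y} = f {x,z}"
  have "x \<in> S16_V" using a S16_edge by blast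
  moreover have "{x,y} \<in> incident S16_E x" "{x,z} \<in> incident S16_E x" using a unfolding incident_def by auto
  ultimately have "{x,y} = {x,z}" using inj a(4) by (meson inj_on_def)
  then show False using a(3) S16_edge[OF a(1)] by (metis doubleton_eq_iff)
qed

lemma tri: "{a,b} \<in> S16_E \<Longrightarrow> {a,c} \<in> S16_E \<Longrightarrow> {b,c} \<in> S16_E \<Longrightarrow> phi a = phi b \<Longrightarrow> phi c = phi a"
proof (rule ccontr)
  assume a: "{a,b} \<in> S16_E" "{a,c} \<in> S16_E" "{b,c} \<in> S16_E" "phi a = phi b" "phi c \<noteq> phi a"
  have "f {a,c} = {phi a, phi c}" using proper a by metis
  moreover have "f {b,c} = {phi b, phi c}" using proper a by metis
  ultimately have "f {c,a} = f {c,b}" using a(4) by (simp add: insert_commute)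
  moreover have "f {c,a} \<noteq> f {c,b}" using dist[of c a b] a S16_edge by (simp add: insert_commute)
  ultimately show False by simp
qed

end

context col begin

lemma blob_dist:
  assumes e12: "{x1,x2} \<in> S16_E" and e13: "{x1,x3} \<in> S16_E" and e14: "{x1,x4} \<in> S16_E"
    and e23: "{x2,x3} \<in> S16_E" and e24: "{x2,x4} \<in> S16_E" and e35: "{x3,x5} \<in> S16_E"
    and e45: "{x4,x5} \<in> S16_E" and d: "distinct [x1,x2,x3,x4,x5]"
  shows "distinct [phi x1, phi x2, phi x3, phi x4, phi x5]"
proof -
  have c: "{x2,x1} = {x1,x2}" "{x3,x1} = {x1,x3}" "{x4,x1} = {x1,x4}" "{x3,x2} = {x2,x3}"
    "{x4,x2} = {x2,x4}" "{x5,x3} = {x3,x5}" "{x5,x4} = {x4,x5}" by (auto simp: insert_commute)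
  have e21: "{x2,x1} \<in> S16_E" and e31: "{x3,x1} \<in> S16_E" and e41: "{x4,x1} \<in> S16_E"
    and e32: "{x3,x2} \<in> S16_E" and e42: "{x4,x2} \<in> S16_E" and e53: "{x5,x3} \<in> S16_E"
    and e54: "{x5,x4} \<in> S16_E" using assms c by auto
  have x1V: "x1 \<in> S16_V" and x2V: "x2 \<in> S16_V" and x3V: "x3 \<in> S16_V" and x4V: "x4 \<in> S16_V"
    and x5V: "x5 \<in> S16_V" using S16_edge e12 e13 e14 e35 by blast+
  have D1: "f {x1,x2} \<noteq> f {x1,x3}" "f {x1,x2} \<noteq> f {x1,x4}" "f {x1,x3} \<noteq> f {x1,x4}"
    using dist e12 e13 e14 d by auto
  have D2: "f {x1,x2} \<noteq> f {x2,x3}" "f {x1,x2} \<noteq> f {x2,x4}" "f {x2,x3} \<noteq> f {x2,x4}"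
    using dist[OF e21 e23] dist[OF e21 e24] dist[OF e23 e24] d c by auto
  have D3: "f {x1,x3} \<noteq> f {x2,x3}" "f {x1,x3} \<noteq> f {x3,x5}" "f {x2,x3} \<noteq> f {x3,x5}"
    using dist[OF e31 e32] dist[OF e31 e35] dist[OF e32 e35] d c by auto
  have D4: "f {x1,x4} \<noteq> f {x2,x4}" "f {x1,x4} \<noteq> f {x4,x5}" "f {x2,x4} \<noteq> f {x4,x5}"
    using dist[OF e41 e42] dist[OF e41 e45] dist[OF e42 e45] d c by auto
  have D5: "f {x3,x5} \<noteq> f {x4,x5}"
    using dist[OF e53 e54] d c by auto
  have I1: "f {x1,x2} \<in> incident E (phi x1)" "f {x1,x3} \<in> incident E (phi x1)" "f {x1,x4} \<in> incident E (phi x1)"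
    using fe e12 e13 e14 by auto
  have I2: "f {x1,x2} \<in> incident E (phi x2)" "f {x2,x3} \<in> incident E (phi x2)" "f {x2,x4} \<in> incident E (phi x2)"
    using fe' fe e12 e23 e24 by auto
  have I3: "f {x1,x3} \<in> incident E (phi x3)" "f {x2,x3} \<in> incident E (phi x3)" "f {x3,x5} \<in> incident E (phi x3)"
    using fe' fe e13 e23 e35 by auto
  have I4: "f {x1,x4} \<in> incident E (phi x4)" "f {x2,x4} \<in> incident E (phi x4)" "f {x4,x5} \<in> incident E (phi x4)"
    using fe' fe e14 e24 e45 by auto
  have I5: "f {x3,x5} \<in> incident E (phi x5)" "f {x4,x5} \<in> incident E (phi x5)"
    using fe' e35 e45 by auto
  have s12: "phi x1 \<noteq> phi x2"
  proof
    assume h: "phi x1 = phi x2"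
    define y where "y = phi x1"
    have yV: "y \<in> V" using phiV x1V y_def by simp
    have h3: "phi x3 = y" using tri[OF e12 e13 e23] h y_def by simp
    have h4: "phi x4 = y" using tri[OF e12 e14 e24] h y_def by simp
    have Iy: "incident E y = {f {x1,x2}, f {x1,x3}, f {x1,x4}}"
      using three[OF yV] I1 D1 y_def by simp
    have a23: "f {x2,x3} = f {x1,x4}" using I2(2) Iy D2(1) D3(1) h y_def by auto
    have a24: "f {x2,x4} = f {x1,x3}" using I2(3) Iy D2(2) D2(3) a23 h y_def by auto
    show False
    proof (cases "phi x5 = y")
      case True
      have "f {x3,x5} = f {x1,x2}" using I3(3) Iy h3 D3(2) D3(3) a23 by auto
      moreover have "f {x4,x5} = f {x1,x2}" using I4(3) Iy h4 D4(2) D4(3) a24 by auto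
      ultimately show False using D5 by simp
    next
      case False
      have "f {x3,x5} = {y, phi x5}" using proper[OF e35] h3 False by auto
      moreover have "f {x4,x5} = {y, phi x5}" using proper[OF e45] h4 False by auto
      ultimately show False using D5 by simp
    qed
  qed
  have s13: "phi x1 \<noteq> phi x3" using tri[OF e13 e12 e32] s12 by auto
  have s23: "phi x2 \<noteq> phi x3" using tri[OF e23 e21 e31] s12 by auto
  have s14: "phi x1 \<noteq> phi x4" using tri[OF e14 e12 e42] s12 by auto
  have s24: "phi x2 \<noteq> phi x4" using tri[OF e24 e21 e41] s12 by auto
  have p13: "f {x1,x3} = {phi x1, phi x3}" using proper[OF e13] s13 by simp
  have p14: "f {x1,x4} = {phi x1, phi x4}" using proper[OF e14] s14 by simp
  have p23: "f {x2,x3} = {phi x2, phi x3}" using proper[OF e23] s23 by simp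
  have p24: "f {x2,x4} = {phi x2, phi x4}" using proper[OF e24] s24 by simp
  have s34: "phi x3 \<noteq> phi x4"
  proof
    assume "phi x3 = phi x4"
    then have "f {x1,x3} = f {x1,x4}" using p13 p14 by simp
    then show False using D1 by simp
  qed
  have s35: "phi x3 \<noteq> phi x5"
  proof
    assume h: "phi x3 = phi x5"
    define u where "u = phi x3"
    have uV: "u \<in> V" using phiV x3V u_def by simp
    have Iu: "incident E u = {f {x1,x3}, f {x2,x3}, f {x3,x5}}"
      using three[OF uV] I3 D3 u_def by simp
    have p45: "f {x4,x5} = {phi x4, u}" using proper[OF e45] s34 h u_def by simp
    have "f {x4,x5} \<in> incident E u" using I5(2) h u_def by simp
    then have "f {x4,x5} = f {x1,x3} \<or> f {x4,x5} = f {x2,x3} \<or> f {x4,x5} = f {x3,x5}" using Iu by simp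
    moreover have "f {x4,x5} \<noteq> f {x1,x3}" using p45 p13 u_def s14 s34 by (auto simp: doubleton_eq_iff)
    moreover have "f {x4,x5} \<noteq> f {x2,x3}" using p45 p23 u_def s24 s34 by (auto simp: doubleton_eq_iff)
    ultimately show False using D5 by simp
  qed
  have s45: "phi x4 \<noteq> phi x5"
  proof
    assume h: "phi x4 = phi x5"
    define u where "u = phi x4"
    have uV: "u \<in> V" using phiV x4V u_def by simp
    have Iu: "incident E u = {f {x1,x4}, f {x2,x4}, f {x4,x5}}"
      using three[OF uV] I4 D4 u_def by simp
    have p35: "f {x3,x5} = {phi x3, u}" using proper[OF e35] s34 h u_def by simp
    have "f {x3,x5} \<in> incident E u" using I5(1) h u_def by simp
    then have "f {x3,x5} = f {x1,x4} \<or> f {x3,x5} = f {x2,x4} \<or> f {x3,x5} = f {x4,x5}" using Iu by simp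
    moreover have "f {x3,x5} \<noteq> f {x1,x4}" using p35 p14 u_def s13 s34 by (auto simp: doubleton_eq_iff)
    moreover have "f {x3,x5} \<noteq> f {x2,x4}" using p35 p24 u_def s23 s34 by (auto simp: doubleton_eq_iff)
    ultimately show False using D5 by simp
  qed
  have p35: "f {x3,x5} = {phi x3, phi x5}" using proper[OF e35] s35 by simp
  have s15: "phi x1 \<noteq> phi x5"
  proof
    assume "phi x1 = phi x5"
    then have "f {x3,x5} = f {x1,x3}" using p35 p13 by (simp add: insert_commute)
    then show False using D3 by simp
  qed
  have s25: "phi x2 \<noteq> phi x5"
  proof
    assume "phi x2 = phi x5"
    then have "f {x3,x5} = f {x2,x3}" using p35 p23 by (simp add: insert_commute)
    then show False using D3 by simp
  qed
  show ?thesis using s12 s13 s14 s15 s23 s24 s25 s34 s35 s45 by simp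
qed

end

context col begin

lemma nbr:
  assumes "u \<in> V" "{u,w1} \<in> E" "{u,w2} \<in> E" "{u,w3} \<in> E" "w1 \<noteq> w2" "w1 \<noteq> w3" "w2 \<noteq> w3"
  shows "{u,w} \<in> E \<longleftrightarrow> w = w1 \<or> w = w2 \<or> w = w3"
proof
  have d: "{u,w1} \<noteq> {u,w2}" "{u,w1} \<noteq> {u,w3}" "{u,w2} \<noteq> {u,w3}"
    using assms noloop by (metis doubleton_eq_iff insert_absorb2)+
  have I: "incident E u = {{u,w1},{u,w2},{u,w3}}"
    using three[OF assms(1)] assms d by (simp add: inc_iff)
  assume "{u,w} \<in> E"
  then have "{u,w} \<in> incident E u" by (simp add: inc_iff)
  then have "{u,w} = {u,w1} \<or> {u,w} = {u,w2} \<or> {u,w} = {u,w3}" using I by simp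
  moreover have "w \<noteq> u" using \<open>{u,w} \<in> E\<close> noloop by auto
  ultimately show "w = w1 \<or> w = w2 \<or> w = w3" by (metis doubleton_eq_iff)
next
  assume "w = w1 \<or> w = w2 \<or> w = w3"
  then show "{u,w} \<in> E" using assms by auto
qed

lemma fE: "{x,y} \<in> S16_E \<Longrightarrow> f {x,y} \<in> E"
  using fe inc_iff by blast

lemma blob_img:
  assumes i: "i \<in> {1,2,3}"
  shows "\<exists>s. blobR (\<lambda>u w. {u,w} \<in> E) (phi (Vx i 1)) (phi (Vx i 2)) (phi (Vx i 3)) (phi (Vx i 4)) (phi (Vx i 5)) s
           \<and> f {Vx i 5, Cen} = {phi (Vx i 5), s}"
proof -
  define x1 where "x1 = Vx i 1"
  define x2 where "x2 = Vx i 2"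
  define x3 where "x3 = Vx i 3"
  define x4 where "x4 = Vx i 4"
  define x5 where "x5 = Vx i 5"
  have e: "{x1,x2} \<in> S16_E" "{x1,x3} \<in> S16_E" "{x1,x4} \<in> S16_E" "{x2,x3} \<in> S16_E" "{x2,x4} \<in> S16_E"
    "{x3,x5} \<in> S16_E" "{x4,x5} \<in> S16_E" "{x5,Cen} \<in> S16_E"
    using S16_blob[OF i] x1_def x2_def x3_def x4_def x5_def by auto
  have dx: "distinct [x1,x2,x3,x4,x5]" using x1_def x2_def x3_def x4_def x5_def by simp
  define a1 where "a1 = phi x1"
  define a2 where "a2 = phi x2"
  define a3 where "a3 = phi x3"
  define a4 where "a4 = phi x4"
  define a5 where "a5 = phi x5"
  have da: "distinct [a1,a2,a3,a4,a5]" using blob_dist[OF e(1-7) dx] a1_def a2_def a3_def a4_def a5_def by simp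
  have aV: "a1 \<in> V" "a2 \<in> V" "a3 \<in> V" "a4 \<in> V" "a5 \<in> V"
    using phiV S16_edge e a1_def a2_def a3_def a4_def a5_def by blast+
  have pe: "f {x1,x2} = {a1,a2}" "f {x1,x3} = {a1,a3}" "f {x1,x4} = {a1,a4}" "f {x2,x3} = {a2,a3}"
    "f {x2,x4} = {a2,a4}" "f {x3,x5} = {a3,a5}" "f {x4,x5} = {a4,a5}"
    using proper e da a1_def a2_def a3_def a4_def a5_def by auto
  have E1: "{a1,a2} \<in> E" "{a1,a3} \<in> E" "{a1,a4} \<in> E" "{a2,a3} \<in> E" "{a2,a4} \<in> E" "{a3,a5} \<in> E" "{a4,a5} \<in> E"
    using fE e pe by metis+
  have C: "\<And>p q. {p,q} = {q,p}" by (simp add: insert_commute)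
  have pc: "f {x5,Cen} \<in> E" "a5 \<in> f {x5,Cen}" using fE[OF e(8)] fe[OF e(8)] a5_def inc_iff by auto
  obtain s where s: "s \<noteq> a5" "f {x5,Cen} = {a5,s}" using pair1[OF pc] by blast
  have e': "{x5,x3} \<in> S16_E" "{x5,x4} \<in> S16_E" using e C by metis+
  have nc: "x3 \<noteq> Cen" "x4 \<noteq> Cen" using x3_def x4_def by simp_all
  have d5: "f {x5,x3} \<noteq> f {x5,Cen}" "f {x5,x4} \<noteq> f {x5,Cen}"
    using dist[OF e'(1) e(8) nc(1)] dist[OF e'(2) e(8) nc(2)] by auto
  have s3: "s \<noteq> a3" using d5(1) s pe(6) C by metis
  have s4: "s \<noteq> a4" using d5(2) s pe(7) C by metis
  have E2: "{a2,a1} \<in> E" "{a3,a1} \<in> E" "{a3,a2} \<in> E" "{a4,a1} \<in> E" "{a4,a2} \<in> E" "{a5,a3} \<in> E" "{a5,a4} \<in> E"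
    using E1 C by metis+
  have dd: "a1 \<noteq> a2" "a1 \<noteq> a3" "a1 \<noteq> a4" "a1 \<noteq> a5" "a2 \<noteq> a3" "a2 \<noteq> a4" "a2 \<noteq> a5" "a3 \<noteq> a4" "a3 \<noteq> a5" "a4 \<noteq> a5"
    using da by auto
  have N1: "\<And>w. {a1,w} \<in> E \<longleftrightarrow> w = a2 \<or> w = a3 \<or> w = a4" using nbr[OF aV(1) E1(1) E1(2) E1(3)] dd by blast
  have N2: "\<And>w. {a2,w} \<in> E \<longleftrightarrow> w = a1 \<or> w = a3 \<or> w = a4" using nbr[OF aV(2) E2(1) E1(4) E1(5)] dd by blast
  have N3: "\<And>w. {a3,w} \<in> E \<longleftrightarrow> w = a1 \<or> w = a2 \<or> w = a5" using nbr[OF aV(3) E2(2) E2(3) E1(6)] dd by blast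
  have N4: "\<And>w. {a4,w} \<in> E \<longleftrightarrow> w = a1 \<or> w = a2 \<or> w = a5" using nbr[OF aV(4) E2(4) E2(5) E1(7)] dd by blast
  have E5: "{a5,s} \<in> E" using pc s by simp
  have N5: "\<And>w. {a5,w} \<in> E \<longleftrightarrow> w = a3 \<or> w = a4 \<or> w = s" using nbr[OF aV(5) E2(6) E2(7) E5] dd s3 s4 by metis
  have s1: "s \<noteq> a1"
  proof
    assume "s = a1" then have "{a1,a5} \<in> E" using E5 C by metis
    then show False using N1[of a5] dd by simp
  qed
  have s2: "s \<noteq> a2"
  proof
    assume "s = a2" then have "{a2,a5} \<in> E" using E5 C by metis
    then show False using N2[of a5] dd by simp
  qed
  have "blobR (\<lambda>u w. {u,w} \<in> E) a1 a2 a3 a4 a5 s"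
    unfolding blobR_def using N1 N2 N3 N4 N5 da s s1 s2 s3 s4 by auto
  then show ?thesis using s unfolding a1_def a2_def a3_def a4_def a5_def x1_def x2_def x3_def x4_def x5_def by blast
qed


lemma symR: "\<And>u w. ((\<lambda>u w. {u,w} \<in> E) u w) = ((\<lambda>u w. {u,w} \<in> E) w u)"
  by (metis insert_commute)

lemma pC: assumes "i \<in> {1,2,3}" shows "{Cen, Vx i 5} \<in> S16_E"
proof -
  have "{Vx i 5, Cen} \<in> S16_E" using S16_blob[OF assms] by blast
  then show ?thesis by (metis insert_commute)
qed

lemma cross:
  assumes i: "i \<in> {1,2,3}" and j: "j \<in> {1,2,3}" and ij: "i \<noteq> j"
    and k: "k \<in> {1,2,3,4,5}" and l: "l \<in> {1,2,3,4,5}" and eq: "phi (Vx i k) = phi (Vx j l)"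
  shows False
proof -
  obtain s where A: "blobR (\<lambda>u w. {u,w} \<in> E) (phi (Vx i 1)) (phi (Vx i 2)) (phi (Vx i 3)) (phi (Vx i 4)) (phi (Vx i 5)) s"
    and fs: "f {Vx i 5, Cen} = {phi (Vx i 5), s}" using blob_img[OF i] by blast
  obtain t where B: "blobR (\<lambda>u w. {u,w} \<in> E) (phi (Vx j 1)) (phi (Vx j 2)) (phi (Vx j 3)) (phi (Vx j 4)) (phi (Vx j 5)) t"
    and ft: "f {Vx j 5, Cen} = {phi (Vx j 5), t}" using blob_img[OF j] by blast
  have m1: "phi (Vx i k) \<in> {phi (Vx i 1), phi (Vx i 2), phi (Vx i 3), phi (Vx i 4), phi (Vx i 5)}" using k by auto
  have m2: "phi (Vx i k) \<in> {phi (Vx j 1), phi (Vx j 2), phi (Vx j 3), phi (Vx j 4), phi (Vx j 5)}" using l eq by auto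
  have "phi (Vx i 5) = phi (Vx j 5) \<and> s = t" using overlap[OF A B symR m1 m2] .
  then have "f {Cen, Vx i 5} = f {Cen, Vx j 5}" using fs ft by (simp add: insert_commute)
  moreover have "f {Cen, Vx i 5} \<noteq> f {Cen, Vx j 5}" using dist[OF pC[OF i] pC[OF j]] ij by simp
  ultimately show False by simp
qed

lemma cen:
  assumes i: "i \<in> {1,2,3}" and k: "k \<in> {1,2,3,4,5}" and eq: "phi Cen = phi (Vx i k)"
  shows False
proof -
  obtain s where A: "blobR (\<lambda>u w. {u,w} \<in> E) (phi (Vx i 1)) (phi (Vx i 2)) (phi (Vx i 3)) (phi (Vx i 4)) (phi (Vx i 5)) s"
    and fs: "f {Vx i 5, Cen} = {phi (Vx i 5), s}" using blob_img[OF i] by blast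
  note a = bfacts[OF A]
  have "f {Vx i 5, Cen} \<in> incident E (phi Cen)" using fe' S16_blob[OF i] by blast
  then have pc: "phi Cen = phi (Vx i 5) \<or> phi Cen = s" using fs inc_iff by auto
  show False
  proof (cases "k = 5")
    case False
    then have "k \<in> {1,2,3,4}" using k by auto
    then have "k = 1 \<or> k = 2 \<or> k = 3 \<or> k = 4" by simp
    then show False using pc eq a(34,35,38,39,41,42,43,44) by (elim disjE) simp_all
  next
    case True
    define j where "j = (if i = 1 then (2::nat) else 1)"
    have j: "j \<in> {1,2,3}" "j \<noteq> i" using j_def by auto
    define pj where "pj = f {Vx j 5, Cen}"
    have pj1: "pj \<in> incident E (phi Cen)" using fe' S16_blob[OF j(1)] pj_def by blast
    have pj2: "pj \<in> incident E (phi (Vx j 5))" using fe S16_blob[OF j(1)] pj_def by blast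
    have "pj \<in> E" "phi (Vx i 5) \<in> pj" using pj1 eq True inc_iff by auto
    then obtain w where w: "w \<noteq> phi (Vx i 5)" "pj = {phi (Vx i 5), w}" using pair1 by blast
    have wE: "{phi (Vx i 5), w} \<in> E" using w \<open>pj \<in> E\<close> by simp
    have "w = phi (Vx i 3) \<or> w = phi (Vx i 4) \<or> w = s" using a(5)[OF wE] .
    moreover have "w \<noteq> s"
    proof
      assume "w = s"
      then have "f {Cen, Vx j 5} = f {Cen, Vx i 5}" using w fs pj_def by (simp add: insert_commute)
      then show False using dist[OF pC[OF j(1)] pC[OF i]] j by simp
    qed
    moreover have "phi (Vx j 5) \<in> pj" using pj2 inc_iff by auto
    ultimately have "phi (Vx j 5) = phi (Vx i 5) \<or> phi (Vx j 5) = phi (Vx i 3) \<or> phi (Vx j 5) = phi (Vx i 4)"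
      using w by auto
    then show False
    proof (elim disjE)
      assume "phi (Vx j 5) = phi (Vx i 5)" then show False using cross[OF j(1) i j(2), of 5 5] by simp
    next
      assume "phi (Vx j 5) = phi (Vx i 3)" then show False using cross[OF j(1) i j(2), of 5 3] by simp
    next
      assume "phi (Vx j 5) = phi (Vx i 4)" then show False using cross[OF j(1) i j(2), of 5 4] by simp
    qed
  qed
qed

lemma S16_V_cases: "x \<in> S16_V \<Longrightarrow> x = Cen \<or> (\<exists>i k. x = Vx i k \<and> i \<in> {1,2,3} \<and> k \<in> {1,2,3,4,5})"
  unfolding S16_V_eq by auto

lemma blob_inj: assumes i: "i \<in> {1,2,3}" and k: "k \<in> {1,2,3,4,5}" and l: "l \<in> {1,2,3,4,5}"
  and eq: "phi (Vx i k) = phi (Vx i l)" shows "k = l"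
proof -
  have "distinct [phi (Vx i 1), phi (Vx i 2), phi (Vx i 3), phi (Vx i 4), phi (Vx i 5)]"
    using S16_blob[OF i] by (intro blob_dist) auto
  then show ?thesis using k l eq by auto
qed

lemma phi_inj: "inj_on phi S16_V"
proof (rule inj_onI)
  fix x y assume x: "x \<in> S16_V" and y: "y \<in> S16_V" and eq: "phi x = phi y"
  show "x = y"
  proof (cases "x = Cen")
    case True
    show ?thesis
    proof (cases "y = Cen")
      case False then obtain j l where "y = Vx j l" "j \<in> {1,2,3}" "l \<in> {1,2,3,4,5}" using S16_V_cases[OF y] by blast
      then show ?thesis using cen eq True by blast
    qed (simp add: True)
  next
    case False
    then obtain i k where ik: "x = Vx i k" "i \<in> {1,2,3}" "k \<in> {1,2,3,4,5}" using S16_V_cases[OF x] by blast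
    show ?thesis
    proof (cases "y = Cen")
      case True then show ?thesis using cen ik eq by metis
    next
      case False
      then obtain j l where jl: "y = Vx j l" "j \<in> {1,2,3}" "l \<in> {1,2,3,4,5}" using S16_V_cases[OF y] by blast
      show ?thesis
      proof (cases "i = j")
        case True then show ?thesis using blob_inj ik jl eq by metis
      next
        case False then show ?thesis using cross ik jl eq by metis
      qed
    qed
  qed
qed

lemma S16_pair: "e \<in> S16_E \<Longrightarrow> x \<in> e \<Longrightarrow> \<exists>x'. x' \<in> S16_V \<and> x' \<noteq> x \<and> e = {x,x'}"
proof -
  assume "e \<in> S16_E" "x \<in> e"
  then obtain u v where uv: "u \<in> S16_V" "v \<in> S16_V" "u \<noteq> v" "e = {u,v}"
    using S16_simple unfolding simple_graph_def by blast
  show ?thesis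
  proof (cases "x = u")
    case True then show ?thesis using uv by (intro exI[of _ v]) auto
  next
    case False then have "x = v" using uv \<open>x \<in> e\<close> by blast
    then show ?thesis using uv by (intro exI[of _ u]) (auto simp: insert_commute)
  qed
qed

lemma nb_img:
  assumes x: "x \<in> S16_V" and e: "{phi x, w} \<in> E"
  shows "\<exists>x'\<in>S16_V. {x,x'} \<in> S16_E \<and> phi x' = w"
proof -
  have "{phi x, w} \<in> incident E (phi x)" using e inc_iff by auto
  then obtain d where d: "d \<in> incident S16_E x" "f d = {phi x, w}" using img[OF x] by (metis imageE)
  then have "d \<in> S16_E" "x \<in> d" unfolding incident_def by auto
  then obtain x' where x': "x' \<in> S16_V" "x' \<noteq> x" "d = {x,x'}" using S16_pair by blast
  have "phi x \<noteq> phi x'" using phi_inj x x' inj_on_def by metis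
  then have "f d = {phi x, phi x'}" using proper \<open>d \<in> S16_E\<close> x' by simp
  moreover have "w \<noteq> phi x" using e noloop by auto
  ultimately have "w = phi x'" using d by (metis doubleton_eq_iff)
  then show ?thesis using x' \<open>d \<in> S16_E\<close> by auto
qed

lemma phi_surj:
  assumes conn: "graph_connected V E"
  shows "phi ` S16_V = V"
proof
  show "phi ` S16_V \<subseteq> V" using phiV by auto
next
  show "V \<subseteq> phi ` S16_V"
  proof
    fix v assume v: "v \<in> V"
    have cV: "Cen \<in> S16_V" unfolding S16_V_def by simp
    have "(phi Cen, v) \<in> {(a, b). {a, b} \<in> E}\<^sup>*" using conn phiV[OF cV] v unfolding graph_connected_def by blast
    then show "v \<in> phi ` S16_V"
    proof (induction rule: rtrancl_induct)
      case base then show ?case using cV by simp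
    next
      case (step b c)
      then obtain x where x: "x \<in> S16_V" "b = phi x" by blast
      have "{phi x, c} \<in> E" using step x by simp
      then show ?case using nb_img[OF x(1)] by blast
    qed
  qed
qed

lemma edges_iff:
  assumes x: "x \<in> S16_V" and y: "y \<in> S16_V"
  shows "{x,y} \<in> S16_E \<longleftrightarrow> {phi x, phi y} \<in> E"
proof
  assume e: "{x,y} \<in> S16_E"
  then have "x \<noteq> y" using S16_edge by blast
  then have "phi x \<noteq> phi y" using phi_inj x y inj_on_def by metis
  then show "{phi x, phi y} \<in> E" using proper[OF e] fE[OF e] by simp
next
  assume "{phi x, phi y} \<in> E"
  then obtain x' where "x' \<in> S16_V" "{x,x'} \<in> S16_E" "phi x' = phi y" using nb_img[OF x] by blast
  then show "{x,y} \<in> S16_E" using phi_inj y inj_on_def by metis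
qed

end

theorem theorem3:
  fixes V :: "'a set" and E :: "'a set set"
  assumes "simple_graph V E" and "cubic V E" and "graph_connected V E"
    and "admits_coloring S16_V S16_E V E"
  shows "graph_iso V E S16_V S16_E"
proof -
  obtain f where f: "H_coloring S16_V S16_E V E f" using assms(4) unfolding admits_coloring_def by blast
  define phi where "phi x = (SOME y. y \<in> V \<and> f ` incident S16_E x = incident E y)" for x
  have ph: "phi x \<in> V \<and> f ` incident S16_E x = incident E (phi x)" if "x \<in> S16_V" for x
  proof -
    have "\<exists>y. y \<in> V \<and> f ` incident S16_E x = incident E y" using f that unfolding H_coloring_def by blast
    then show ?thesis unfolding phi_def by (rule someI_ex)
  qed
  interpret col V E f phi
    using assms(1,2) ph by unfold_locales auto
  have bij: "bij_betw phi S16_V V" using phi_inj phi_surj[OF assms(3)] unfolding bij_betw_def by simp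
  define psi where "psi = inv_into S16_V phi"
  have bpsi: "bij_betw psi V S16_V" using bij_betw_inv_into[OF bij] psi_def by simp
  have pinv: "phi (psi u) = u" "psi u \<in> S16_V" if "u \<in> V" for u
    using that bij psi_def by (auto simp: bij_betw_def f_inv_into_f inv_into_into)
  have "\<forall>u\<in>V. \<forall>v\<in>V. {u, v} \<in> E \<longleftrightarrow> {psi u, psi v} \<in> S16_E"
  proof (intro ballI)
    fix u v assume u: "u \<in> V" and v: "v \<in> V"
    show "{u, v} \<in> E \<longleftrightarrow> {psi u, psi v} \<in> S16_E"
      using edges_iff[OF pinv(2)[OF u] pinv(2)[OF v]] pinv(1)[OF u] pinv(1)[OF v] by simp
  qed
  then show ?thesis unfolding graph_iso_def using bpsi by blast
qed


end
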